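(* Let $N\ge2$ and let $u\in C(S^{N-1},(0,\infty))$ be nonconstant and separable in $S^{N-1}$. Then there exist $M\in O(N)$ and $h_1,h_2\in[-1,1]$ such that: (i) $h_1>h_2$; (ii) $u_M^{-1}(\max_{S^{N-1}}u_M)=\{x\in S^{N-1}:x_N\ge h_1\}$ and $u_M^{-1}(\min_{S^{N-1}}u_M)=\{x\in S^{N-1}:x_N\le h_2\}$; (iii) for every $h\in[-1,1]$, $u_M$ is constant on $\{x\in S^{N-1}:x_N=h\}$; (iv) the function $\alpha\mapsto u_M(0_{N-2},\cos\alpha,\sin\alpha)$ is nonincreasing on $[\pi/2,3\pi/2]$.
   Context: $S^{N-1}$ is the unit sphere in $\mathbb{R}^N$ centered at $0$; $O(N)$ is the orthogonal group; for $M\in O(N)$, $u_M(x):=u(M^{-1}x)$; $0_k$ denotes the zero vector in $\mathbb{R}^k$. For an open half-space $H\subset\mathbb{R}^N$, $\sigma_H$ denotes the reflection across $\partial H$. A function $u\in C(S^{N-1},\mathbb{R})$ is separable in $S^{N-1}$ if for every open half-space $H\subset\mathbb{R}^N$ with $0\in\partial H$, either $u(x)\ge u(\sigma_Hx)$ for all $x\in H\cap S^{N-1}$, or $u(x)\le u(\sigma_Hx)$ for all $x\in H\cap S^{N-1}$. *)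

theory Defs
  imports "HOL-Analysis.Analysis"
begin

text \<open>Coordinates of R^N are indexed by a finite linearly ordered type 'n;
  the N-th (last) coordinate is the largest index, the (N-1)-th is the second largest.\<close>

definition last_ix :: "'n::{finite,linorder}" where
  "last_ix = Max (UNIV :: 'n set)"

definition penult_ix :: "'n::{finite,linorder}" where
  "penult_ix = Max (UNIV - {last_ix :: 'n})"

definition reflect_hyp :: "'a::real_inner \<Rightarrow> 'a \<Rightarrow> 'a" where
  "reflect_hyp a x = x - (2 * (a \<bullet> x) / (a \<bullet> a)) *\<^sub>R a"

text \<open>Open half-spaces H with 0 on the boundary are exactly {x. a \<bullet> x > 0}, a \<noteq> 0;
  sigma_H is reflect_hyp a.\<close>
definition separable_sphere :: "('a::euclidean_space \<Rightarrow> real) \<Rightarrow> bool" where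
  "separable_sphere u \<longleftrightarrow>
     (\<forall>a::'a. a \<noteq> 0 \<longrightarrow>
        (\<forall>x\<in>sphere 0 1. a \<bullet> x > 0 \<longrightarrow> u x \<ge> u (reflect_hyp a x)) \<or>
        (\<forall>x\<in>sphere 0 1. a \<bullet> x > 0 \<longrightarrow> u x \<le> u (reflect_hyp a x)))"

definition rot_fun :: "(real^'n \<Rightarrow> real) \<Rightarrow> real^'n^'n \<Rightarrow> real^'n \<Rightarrow> real" where
  "rot_fun u M x = u (matrix_inv M *v x)"

end

theory Submission
  imports Defs
begin


lemma rh_inner_a: "(a::'a::real_inner) \<noteq> 0 \<Longrightarrow> a \<bullet> reflect_hyp a x = - (a \<bullet> x)"
  by (simp add: reflect_hyp_def inner_diff_right field_simps)

lemma rh_rh: "(a::'a::real_inner) \<noteq> 0 \<Longrightarrow> reflect_hyp a (reflect_hyp a x) = x"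
proof -
  assume a: "a \<noteq> 0"
  have "reflect_hyp a (reflect_hyp a x) = reflect_hyp a x - (2 * (a \<bullet> reflect_hyp a x) / (a \<bullet> a)) *\<^sub>R a"
    by (simp add: reflect_hyp_def)
  also have "\<dots> = x" using a by (simp add: rh_inner_a) (simp add: reflect_hyp_def)
  finally show ?thesis .
qed

lemma rh_sym: "reflect_hyp (a::'a::real_inner) x \<bullet> y = x \<bullet> reflect_hyp a y"
  by (simp add: reflect_hyp_def inner_diff_left inner_diff_right inner_commute algebra_simps)

lemma rh_linear: "linear (reflect_hyp (a::'a::real_inner))"
  unfolding reflect_hyp_def
  by (intro linearI) (simp_all add: inner_add_right scaleR_add_right algebra_simps add_divide_distrib scaleR_add_left)

lemma rh_inner_same: "(a::'a::real_inner) \<noteq> 0 \<Longrightarrow> reflect_hyp a x \<bullet> reflect_hyp a y = x \<bullet> y"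
  by (simp add: rh_sym rh_rh)

lemma rh_norm: "(a::'a::real_inner) \<noteq> 0 \<Longrightarrow> norm (reflect_hyp a x) = norm x"
  by (metis norm_eq_sqrt_inner rh_inner_same)

lemma rh_zero: "reflect_hyp 0 x = x"
  by (simp add: reflect_hyp_def)

lemma rh_neg: "reflect_hyp (- a) x = reflect_hyp (a::'a::real_inner) x"
  by (simp add: reflect_hyp_def)

lemma rh_swap:
  fixes x y :: "'a::real_inner"
  assumes "norm x = 1" "norm y = 1" "x \<noteq> y"
  shows "reflect_hyp (x - y) x = y"
proof -
  have xx: "x \<bullet> x = 1" "y \<bullet> y = 1" using assms by (simp_all add: dot_square_norm)
  have dd: "(x - y) \<bullet> (x - y) = 2 * ((x - y) \<bullet> x)"
    using xx by (simp add: inner_diff_left inner_diff_right inner_commute)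
  have nz: "(x - y) \<bullet> (x - y) \<noteq> 0" using assms(3) by simp
  have k: "(x - y) \<bullet> x \<noteq> 0"
  proof
    assume "(x - y) \<bullet> x = 0"
    with dd have "(x - y) \<bullet> (x - y) = 0" by simp
    with nz show False by blast
  qed
  have f1: "2 * ((x - y) \<bullet> x) / ((x - y) \<bullet> (x - y)) = 1" by (metis dd k divide_self mult_eq_0_iff zero_neq_numeral)
  show ?thesis unfolding reflect_hyp_def f1 by simp
qed

lemma rh_pos:
  fixes x y :: "'a::real_inner"
  assumes "norm x = 1" "norm y = 1" "x \<noteq> y"
  shows "(x - y) \<bullet> x > 0"
proof -
  have xx: "x \<bullet> x = 1" "y \<bullet> y = 1" using assms by (simp_all add: dot_square_norm)
  have dd: "(x - y) \<bullet> (x - y) = 2 * ((x - y) \<bullet> x)"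
    using xx by (simp add: inner_diff_left inner_diff_right inner_commute)
  have "(x - y) \<bullet> (x - y) > 0" using assms(3) by simp
  then show ?thesis using dd by simp
qed



definition good :: "('a::euclidean_space \<Rightarrow> real) \<Rightarrow> 'a \<Rightarrow> bool" where
  "good u d \<longleftrightarrow> (\<forall>x\<in>sphere 0 1. d \<bullet> x > 0 \<longrightarrow> u (reflect_hyp d x) \<le> u x)"

lemma sep_cases:
  fixes u :: "'a::euclidean_space \<Rightarrow> real"
  assumes sep: "separable_sphere u" and d: "d \<noteq> 0"
  shows "good u d \<or> good u (- d)"
proof -
  from sep d have
    "(\<forall>x\<in>sphere 0 1. d \<bullet> x > 0 \<longrightarrow> u x \<ge> u (reflect_hyp d x)) \<or>
     (\<forall>x\<in>sphere 0 1. d \<bullet> x > 0 \<longrightarrow> u x \<le> u (reflect_hyp d x))"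
    unfolding separable_sphere_def by blast
  then show ?thesis
  proof
    assume "\<forall>x\<in>sphere 0 1. d \<bullet> x > 0 \<longrightarrow> u x \<ge> u (reflect_hyp d x)"
    then show ?thesis unfolding good_def by blast
  next
    assume h: "\<forall>x\<in>sphere 0 1. d \<bullet> x > 0 \<longrightarrow> u x \<le> u (reflect_hyp d x)"
    have "good u (- d)" unfolding good_def
    proof (intro ballI impI)
      fix x :: 'a assume x: "x \<in> sphere 0 1" and p: "- d \<bullet> x > 0"
      define y where "y = reflect_hyp d x"
      have y: "y \<in> sphere 0 1" using x d by (simp add: y_def rh_norm)
      have "d \<bullet> y > 0" using p d by (simp add: y_def rh_inner_a)
      then have "u y \<le> u (reflect_hyp d y)" using h y by blast
      then show "u (reflect_hyp (- d) x) \<le> u x" using d by (simp add: y_def rh_neg rh_rh)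
    qed
    then show ?thesis by blast
  qed
qed

lemma pos_good:
  fixes u :: "'a::euclidean_space \<Rightarrow> real"
  assumes sep: "separable_sphere u"
    and hc: "\<forall>d. d \<noteq> 0 \<and> good u d \<longrightarrow> 0 \<le> c \<bullet> d"
    and p: "0 < c \<bullet> d"
  shows "good u d"
proof -
  have d: "d \<noteq> 0" using p by auto
  have "\<not> good u (- d)"
  proof
    assume "good u (- d)"
    moreover have "- d \<noteq> 0" using d by simp
    ultimately have "0 \<le> c \<bullet> (- d)" using hc by blast
    then show False using p by simp
  qed
  then show ?thesis using sep_cases[OF sep d] by blast
qed

lemma mono_strict:
  fixes u :: "'a::euclidean_space \<Rightarrow> real"
  assumes sep: "separable_sphere u"
    and hc: "\<forall>d. d \<noteq> 0 \<and> good u d \<longrightarrow> 0 \<le> c \<bullet> d"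
    and x: "x \<in> sphere 0 1" and y: "y \<in> sphere 0 1" and lt: "y \<bullet> c < x \<bullet> c"
  shows "u y \<le> u x"
proof -
  have xy: "x \<noteq> y" using lt by auto
  have "0 < c \<bullet> (x - y)" using lt by (simp add: inner_diff_right inner_commute)
  then have g: "good u (x - y)" by (rule pos_good[OF sep hc])
  have "(x - y) \<bullet> x > 0" using rh_pos[of x y] x y xy by simp
  then have "u (reflect_hyp (x - y) x) \<le> u x" using g x unfolding good_def by blast
  then show ?thesis using rh_swap[of x y] x y xy by simp
qed

lemma mono_le:
  fixes u :: "'a::euclidean_space \<Rightarrow> real"
  assumes cont: "continuous_on (sphere 0 1) u" and sep: "separable_sphere u"
    and hc: "\<forall>d. d \<noteq> 0 \<and> good u d \<longrightarrow> 0 \<le> c \<bullet> d" and c0: "c \<noteq> 0"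
    and x: "x \<in> sphere 0 1" and y: "y \<in> sphere 0 1" and le: "y \<bullet> c \<le> x \<bullet> c"
  shows "u y \<le> u x"
proof (cases "y \<bullet> c < x \<bullet> c")
  case True
  then show ?thesis using mono_strict[OF sep hc x y] by blast
next
  case False
  then have eq: "y \<bullet> c = x \<bullet> c" using le by simp
  show ?thesis
  proof (cases "x = y")
    case True then show ?thesis by simp
  next
    case xy: False
    define d where "d = x - y"
    have dc: "d \<bullet> c = 0" using eq by (simp add: d_def inner_diff_left)
    have dx: "d \<bullet> x > 0" using rh_pos[of x y] x y xy by (simp add: d_def)
    have d0: "d \<noteq> 0" using xy by (simp add: d_def)
    define g where "g t = reflect_hyp (d + t *\<^sub>R c) x" for t :: real
    let ?F = "at_right (0::real)"
    have lim1: "((\<lambda>t. (d + t *\<^sub>R c) \<bullet> x) \<longlongrightarrow> d \<bullet> x) ?F"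
      by (rule tendsto_eq_intros refl | simp)+
    have ev1: "eventually (\<lambda>t. (d + t *\<^sub>R c) \<bullet> x > 0) ?F"
      using order_tendstoD(1)[OF lim1 dx] .
    have ev2: "eventually (\<lambda>t. t > 0) ?F" by (simp add: eventually_at_right_less)
    have dd: "d \<bullet> d \<noteq> 0" using d0 by simp
    have l1: "((\<lambda>t. d + t *\<^sub>R c) \<longlongrightarrow> d) ?F"
    proof -
      have "((\<lambda>t. d + t *\<^sub>R c) \<longlongrightarrow> d + 0 *\<^sub>R c) ?F" by (intro tendsto_intros)
      then show ?thesis by simp
    qed
    have limg: "(g \<longlongrightarrow> reflect_hyp d x) ?F"
      unfolding g_def reflect_hyp_def
      by (intro tendsto_intros l1 dd)
    have gy: "reflect_hyp d x = y" using rh_swap[of x y] x y xy by (simp add: d_def)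
    have evS: "eventually (\<lambda>t. g t \<in> sphere 0 1) ?F"
      using ev1
    proof (rule eventually_mono)
      fix t assume "(d + t *\<^sub>R c) \<bullet> x > 0"
      then have "d + t *\<^sub>R c \<noteq> 0" by auto
      then show "g t \<in> sphere 0 1" using x by (simp add: g_def rh_norm)
    qed
    have evle: "eventually (\<lambda>t. u (g t) \<le> u x) ?F"
      using eventually_conj[OF ev1 ev2]
    proof (rule eventually_mono)
      fix t assume t: "(d + t *\<^sub>R c) \<bullet> x > 0 \<and> t > 0"
      define a where "a = d + t *\<^sub>R c"
      have a0: "a \<noteq> 0" using t by (auto simp: a_def)
      have aa: "a \<bullet> a > 0" using a0 by simp
      define k where "k = 2 * (a \<bullet> x) / (a \<bullet> a)"
      have k: "k > 0" using t aa by (simp add: k_def a_def)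
      have gt: "g t = x - k *\<^sub>R a" by (simp add: g_def reflect_hyp_def k_def a_def)
      have "g t \<bullet> c = x \<bullet> c - k * (t * (c \<bullet> c))"
        using dc by (simp add: gt a_def inner_diff_left inner_add_left)
      moreover have "k * (t * (c \<bullet> c)) > 0" using k t c0 by simp
      ultimately have "g t \<bullet> c < x \<bullet> c" by linarith
      moreover have "g t \<in> sphere 0 1" using a0 x by (simp add: g_def rh_norm a_def)
      ultimately show "u (g t) \<le> u x" using mono_strict[OF sep hc x] by blast
    qed
    have limu: "((\<lambda>t. u (g t)) \<longlongrightarrow> u y) ?F"
      using continuous_on_tendsto_compose[OF cont limg[unfolded gy] y evS] .
    show ?thesis
      by (rule tendsto_le[OF trivial_limit_at_right_real tendsto_const limu evle])
  qed
qed



lemma penult_ne_last: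
  assumes "CARD('n::{finite,linorder}) \<ge> 2"
  shows "(penult_ix::'n) \<noteq> last_ix"
proof -
  have "UNIV - {last_ix::'n} \<noteq> {}"
  proof
    assume "UNIV - {last_ix::'n} = {}"
    then have "(UNIV::'n set) \<subseteq> {last_ix}" by blast
    then have "CARD('n) \<le> card {last_ix::'n}" by (intro card_mono) auto
    then show False using assms by simp
  qed
  then have "penult_ix \<in> UNIV - {last_ix::'n}"
    unfolding penult_ix_def by (intro Max_in) auto
  then show ?thesis by blast
qed

lemma sin_antimono:
  assumes "pi/2 \<le> a" "a \<le> b" "b \<le> 3*pi/2"
  shows "sin b \<le> sin a"
proof -
  have "cos (b - pi/2) \<le> cos (a - pi/2)"
    using assms by (intro cos_monotone_0_pi_le) auto
  then show ?thesis by (simp add: cos_diff)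
qed

lemma final_props:
  fixes F :: "real^'n::{finite,linorder} \<Rightarrow> real"
  assumes card: "CARD('n) \<ge> 2"
    and cont: "continuous_on (sphere 0 1) F"
    and nc: "\<exists>x\<in>sphere 0 1. \<exists>y\<in>sphere 0 1. F x \<noteq> F y"
    and P: "\<And>x y. x \<in> sphere 0 1 \<Longrightarrow> y \<in> sphere 0 1 \<Longrightarrow> y $ last_ix \<le> x $ last_ix \<Longrightarrow> F y \<le> F x"
  shows "\<exists>h1 h2::real.
     h1 \<in> {-1..1} \<and> h2 \<in> {-1..1} \<and>
     h1 > h2 \<and>
     {x\<in>sphere 0 1. F x = (SUP y\<in>sphere 0 1. F y)}
        = {x\<in>sphere 0 1. x $ last_ix \<ge> h1} \<and>
     {x\<in>sphere 0 1. F x = (INF y\<in>sphere 0 1. F y)}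
        = {x\<in>sphere 0 1. x $ last_ix \<le> h2} \<and>
     (\<forall>h\<in>{-1..1}. \<forall>x\<in>sphere 0 1. \<forall>y\<in>sphere 0 1.
        x $ last_ix = h \<and> y $ last_ix = h \<longrightarrow> F x = F y) \<and>
     (\<forall>\<alpha> \<beta>. pi/2 \<le> \<alpha> \<and> \<alpha> \<le> \<beta> \<and> \<beta> \<le> 3*pi/2 \<longrightarrow>
        F (\<chi> i. if i = last_ix then sin \<beta> else if i = penult_ix then cos \<beta> else 0)
        \<le> F (\<chi> i. if i = last_ix then sin \<alpha> else if i = penult_ix then cos \<alpha> else 0))"
proof -
  let ?S = "sphere (0::real^'n::{finite,linorder}) 1"
  have cS: "compact ?S" by simp
  have neS: "?S \<noteq> {}" by (simp add: sphere_def) (metis norm_axis_1)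
  obtain xm where xm: "xm \<in> ?S" "\<And>y. y \<in> ?S \<Longrightarrow> F y \<le> F xm"
    using continuous_attains_sup[OF cS neS cont] by blast
  obtain xn where xn: "xn \<in> ?S" "\<And>y. y \<in> ?S \<Longrightarrow> F xn \<le> F y"
    using continuous_attains_inf[OF cS neS cont] by blast
  have sup: "(SUP y\<in>?S. F y) = F xm"
    using xm by (intro cSup_eq_maximum) auto
  have inf: "(INF y\<in>?S. F y) = F xn"
    using xn by (intro cInf_eq_minimum) auto
  define Kx where "Kx = {x\<in>?S. F x = F xm}"
  define Kn where "Kn = {x\<in>?S. F x = F xn}"
  have cKx: "compact Kx" unfolding Kx_def
    unfolding compact_eq_bounded_closed by (intro conjI bounded_subset[OF bounded_sphere[of 0 1]] continuous_closed_preimage_constant[OF cont closed_sphere]) auto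
  have cKn: "compact Kn" unfolding Kn_def
    unfolding compact_eq_bounded_closed by (intro conjI bounded_subset[OF bounded_sphere[of 0 1]] continuous_closed_preimage_constant[OF cont closed_sphere]) auto
  have ccomp: "continuous_on A (\<lambda>x::real^'n::{finite,linorder}. x $ last_ix)" for A
    by (intro continuous_intros)
  obtain y0 where y0: "y0 \<in> Kx" "\<And>y. y \<in> Kx \<Longrightarrow> y0 $ last_ix \<le> y $ last_ix"
    using continuous_attains_inf[OF cKx _ ccomp] xm(1) unfolding Kx_def by blast
  obtain z0 where z0: "z0 \<in> Kn" "\<And>y. y \<in> Kn \<Longrightarrow> y $ last_ix \<le> z0 $ last_ix"
    using continuous_attains_sup[OF cKn _ ccomp] xn(1) unfolding Kn_def by blast
  define h1 where "h1 = y0 $ last_ix"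
  define h2 where "h2 = z0 $ last_ix"
  have bnd: "x $ i \<in> {-1..1}" if "x \<in> ?S" for x :: "real^'n::{finite,linorder}" and i
    using component_le_norm_cart[of x i] that by (auto simp: abs_le_iff)
  have y0S: "y0 \<in> ?S" and Fy0: "F y0 = F xm" using y0(1) by (auto simp: Kx_def)
  have z0S: "z0 \<in> ?S" and Fz0: "F z0 = F xn" using z0(1) by (auto simp: Kn_def)
  have A1: "{x\<in>?S. F x = (SUP y\<in>?S. F y)} = {x\<in>?S. x $ last_ix \<ge> h1}"
  proof (intro set_eqI iffI)
    fix x assume "x \<in> {x\<in>?S. F x = (SUP y\<in>?S. F y)}"
    then have "x \<in> Kx" by (simp add: sup Kx_def)
    then show "x \<in> {x\<in>?S. x $ last_ix \<ge> h1}" using y0(2) by (auto simp: h1_def Kx_def)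
  next
    fix x assume x: "x \<in> {x\<in>?S. x $ last_ix \<ge> h1}"
    then have "F y0 \<le> F x" using P[OF _ y0S] by (auto simp: h1_def)
    moreover have "F x \<le> F xm" using x xm(2) by auto
    ultimately show "x \<in> {x\<in>?S. F x = (SUP y\<in>?S. F y)}" using x Fy0 sup by auto
  qed
  have A2: "{x\<in>?S. F x = (INF y\<in>?S. F y)} = {x\<in>?S. x $ last_ix \<le> h2}"
  proof (intro set_eqI iffI)
    fix x assume "x \<in> {x\<in>?S. F x = (INF y\<in>?S. F y)}"
    then have "x \<in> Kn" by (simp add: inf Kn_def)
    then show "x \<in> {x\<in>?S. x $ last_ix \<le> h2}" using z0(2) by (auto simp: h2_def Kn_def)
  next
    fix x assume x: "x \<in> {x\<in>?S. x $ last_ix \<le> h2}"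
    then have "F x \<le> F z0" using P[OF z0S] by (auto simp: h2_def)
    moreover have "F xn \<le> F x" using x xn(2) by auto
    ultimately show "x \<in> {x\<in>?S. F x = (INF y\<in>?S. F y)}" using x Fz0 inf by auto
  qed
  have A3: "h1 > h2"
  proof (rule ccontr)
    assume "\<not> h1 > h2"
    then have "F y0 \<le> F z0" using P[OF z0S y0S] by (simp add: h1_def h2_def)
    then have "F xm \<le> F xn" using Fy0 Fz0 by simp
    moreover obtain a b where "a \<in> ?S" "b \<in> ?S" "F a \<noteq> F b" using nc by blast
    ultimately show False using xm(2)[of a] xm(2)[of b] xn(2)[of a] xn(2)[of b] by linarith
  qed
  have A4: "\<forall>h\<in>{-1..1}. \<forall>x\<in>?S. \<forall>y\<in>?S. x $ last_ix = h \<and> y $ last_ix = h \<longrightarrow> F x = F y"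
    using P by (metis order_antisym order_refl)
  have pl: "(penult_ix::'n::{finite,linorder}) \<noteq> last_ix" using penult_ne_last[OF card] .
  have zS: "(\<chi> i. if i = last_ix then sin t else if i = penult_ix then cos t else 0) \<in> ?S" for t
  proof -
    let ?z = "(\<chi> i. if i = (last_ix::'n::{finite,linorder}) then sin t else if i = penult_ix then cos t else (0::real))"
    have "?z \<bullet> ?z = (\<Sum>i\<in>(UNIV::'n::{finite,linorder} set). (if i = last_ix then (sin t)^2 else 0) + (if i = penult_ix then (cos t)^2 else 0))"
      unfolding inner_vec_def by (rule sum.cong) (auto simp: pl power2_eq_square)
    also have "\<dots> = 1" by (simp add: sum.distrib)
    finally show ?thesis by (simp add: norm_eq_sqrt_inner)
  qed
  have A5: "\<forall>\<alpha> \<beta>. pi/2 \<le> \<alpha> \<and> \<alpha> \<le> \<beta> \<and> \<beta> \<le> 3*pi/2 \<longrightarrow>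
        F (\<chi> i. if i = last_ix then sin \<beta> else if i = penult_ix then cos \<beta> else 0)
        \<le> F (\<chi> i. if i = last_ix then sin \<alpha> else if i = penult_ix then cos \<alpha> else 0)"
    using P[OF zS zS] sin_antimono by simp
  show ?thesis
    by (intro exI[of _ h1] exI[of _ h2] conjI A1 A2 A3 A4 A5) (use bnd y0S z0S in \<open>auto simp: h1_def h2_def\<close>)
qed



definition annulus :: "'a::real_normed_vector set" where
  "annulus = cball 0 1 - ball 0 (1/2)"

lemma mem_annulus: "x \<in> annulus \<longleftrightarrow> 1/2 \<le> norm x \<and> norm x \<le> 1"
  by (auto simp: annulus_def)

lemma compact_annulus: "compact (annulus :: 'a::euclidean_space set)"
  unfolding annulus_def compact_eq_bounded_closed
  by (intro conjI bounded_diff bounded_cball closed_Diff closed_cball open_ball)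

lemma abs_int:
  fixes h :: "'a::euclidean_space \<Rightarrow> real"
  assumes S: "compact S" and h: "continuous_on S h"
  shows "h absolutely_integrable_on S"
proof -
  obtain B where B: "\<And>x. x \<in> S \<Longrightarrow> norm (h x) \<le> B"
    using compact_imp_bounded[OF compact_continuous_image[OF h S]] unfolding bounded_iff by auto
  have Sl: "S \<in> lmeasurable" using lmeasurable_compact[OF S] .
  then have Ss: "S \<in> sets lebesgue" by (simp add: fmeasurableD)
  show ?thesis
    by (rule measurable_bounded_by_integrable_imp_absolutely_integrable[where g = "\<lambda>_. B"])
       (use continuous_imp_measurable_on_sets_lebesgue[OF h Ss] Ss integrable_on_const[OF Sl] B in auto)
qed

lemma int_cont:
  fixes h :: "'a::euclidean_space \<Rightarrow> real"
  assumes S: "compact S" and h: "continuous_on S h"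
  shows "h integrable_on S"
  using abs_int[OF S h] by (simp add: absolutely_integrable_on_def)

lemma rh_cont: "continuous_on A (reflect_hyp (d::'a::real_inner))"
proof (cases "d = 0")
  case True then show ?thesis by (simp add: rh_zero[abs_def] continuous_on_id)
next
  case False then show ?thesis unfolding reflect_hyp_def by (intro continuous_intros) auto
qed

lemma rh_scale: "reflect_hyp d (r *\<^sub>R x) = r *\<^sub>R reflect_hyp (d::'a::real_inner) x"
  using linear_scale[OF rh_linear] .

lemma rh_annulus:
  fixes d :: "'a::real_inner"
  assumes d: "d \<noteq> 0"
  shows "reflect_hyp d ` annulus = annulus"
proof (intro set_eqI iffI)
  fix x :: 'a assume "x \<in> reflect_hyp d ` annulus"
  then show "x \<in> annulus" using d by (auto simp: mem_annulus rh_norm)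
next
  fix x :: 'a assume x: "x \<in> annulus"
  then have "reflect_hyp d x \<in> annulus" using d by (simp add: mem_annulus rh_norm)
  moreover have "x = reflect_hyp d (reflect_hyp d x)" using d by (simp add: rh_rh)
  ultimately show "x \<in> reflect_hyp d ` annulus" by blast
qed

lemma inv_int:
  fixes h :: "real^'m::{finite,wellorder} \<Rightarrow> real"
  assumes d: "d \<noteq> 0" and h: "continuous_on annulus h"
  shows "integral annulus (\<lambda>x. h (reflect_hyp d x)) = integral annulus h"
proof -
  let ?s = "reflect_hyp d"
  let ?v = "One :: real^'m::{finite,wellorder}"
  have ot: "orthogonal_transformation ?s"
    unfolding orthogonal_transformation_def using rh_linear rh_inner_same[OF d] by blast
  have det: "\<bar>det (matrix ?s)\<bar> = 1" using orthogonal_transformation_det[OF ot] .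
  have hs: "continuous_on annulus (\<lambda>x. h (?s x))"
    by (rule continuous_on_compose2[OF h rh_cont]) (use rh_annulus[OF d] in auto)
  have ih: "h integrable_on annulus" by (rule int_cont[OF compact_annulus h])
  have ihs: "(\<lambda>x. h (?s x)) integrable_on annulus" by (rule int_cont[OF compact_annulus hs])
  have ab: "(\<lambda>x. h x *\<^sub>R ?v) absolutely_integrable_on (?s ` annulus)"
    unfolding rh_annulus[OF d] by (rule absolutely_integrable_scaleR_right[OF abs_int[OF compact_annulus h]])
  have "integral (?s ` annulus) (\<lambda>x. h x *\<^sub>R ?v) = \<bar>det (matrix ?s)\<bar> *\<^sub>R integral annulus ((\<lambda>x. h x *\<^sub>R ?v) \<circ> ?s)"
    by (rule integral_change_of_variables_linear[OF rh_linear]) (use ab in blast)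
  then have "integral annulus (\<lambda>x. h x *\<^sub>R ?v) = integral annulus (\<lambda>x. h (?s x) *\<^sub>R ?v)"
    unfolding rh_annulus[OF d] det by (simp add: o_def)
  moreover have "integral annulus (\<lambda>x. h x *\<^sub>R ?v) = integral annulus h *\<^sub>R ?v"
    by (rule integral_unique[OF has_integral_scaleR_left[OF integrable_integral[OF ih]]])
  moreover have "integral annulus (\<lambda>x. h (?s x) *\<^sub>R ?v) = integral annulus (\<lambda>x. h (?s x)) *\<^sub>R ?v"
    by (rule integral_unique[OF has_integral_scaleR_left[OF integrable_integral[OF ihs]]])
  ultimately show ?thesis by (simp add: scaleR_cancel_right)
qed

lemma pos_int:
  fixes G :: "'a::euclidean_space \<Rightarrow> real"
  assumes S: "compact S" and G: "continuous_on S G" and nn: "\<And>x. x \<in> S \<Longrightarrow> 0 \<le> G x"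
    and r: "r > 0" and sub: "ball x0 r \<subseteq> S" and pos: "G x0 > 0"
  shows "0 < integral S G"
proof -
  have x0: "x0 \<in> S" using sub r by auto
  obtain \<delta> where \<delta>: "\<delta> > 0" "\<And>x. x \<in> S \<Longrightarrow> dist x x0 < \<delta> \<Longrightarrow> dist (G x) (G x0) < G x0 / 2"
    using G x0 pos unfolding continuous_on_iff by (metis half_gt_zero)
  let ?B = "ball x0 (min r \<delta>)"
  have "x0 \<in> ?B" using r \<delta> by simp
  then obtain a b where ab: "cbox a b \<subseteq> ?B" "\<forall>i\<in>Basis. a \<bullet> i < b \<bullet> i"
    using open_contains_cbox[OF open_ball] by metis
  have "ball x0 (min r \<delta>) \<subseteq> ball x0 r" by (rule subset_ball) simp
  then have cS: "cbox a b \<subseteq> S" using ab(1) sub by blast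
  have lb: "\<forall>x\<in>cbox a b. G x0 / 2 \<le> G x \<bullet> 1"
  proof
    fix x assume x: "x \<in> cbox a b"
    then have "x \<in> S" "dist x x0 < \<delta>" using cS ab(1) by (auto simp: dist_commute)
    then have "dist (G x) (G x0) < G x0 / 2" using \<delta>(2) by blast
    then show "G x0 / 2 \<le> G x \<bullet> 1" unfolding dist_real_def inner_real_def by arith
  qed
  have ic: "G integrable_on cbox a b"
    by (rule int_cont[OF compact_cbox continuous_on_subset[OF G cS]])
  have "G x0 / 2 * measure lborel (cbox a b) \<le> integral (cbox a b) G \<bullet> 1"
    by (rule integral_component_lbound[OF ic lb]) simp
  moreover have "0 < G x0 / 2 * measure lborel (cbox a b)"
    using pos content_pos_lt[OF ab(2)] by simp
  moreover have "integral (cbox a b) G \<le> integral S G"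
    by (rule integral_subset_le[OF cS ic int_cont[OF S G]]) (use nn in auto)
  ultimately show ?thesis by simp
qed



definition W :: "('a::real_normed_vector \<Rightarrow> real) \<Rightarrow> 'a \<Rightarrow> real" where
  "W U x = U (x /\<^sub>R norm x)"

lemma annulus_ne0: "x \<in> annulus \<Longrightarrow> x \<noteq> 0"
  by (auto simp: mem_annulus)

lemma W_cont:
  fixes U :: "'a::euclidean_space \<Rightarrow> real"
  assumes cont: "continuous_on (sphere 0 1) U"
  shows "continuous_on annulus (W U)"
proof -
  have c1: "continuous_on annulus (\<lambda>x::'a. x /\<^sub>R norm x)"
    by (intro continuous_intros) (auto simp: annulus_ne0)
  show ?thesis unfolding W_def
    by (rule continuous_on_compose2[OF cont c1]) (auto simp: annulus_ne0)
qed

lemma W_refl: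
  fixes U :: "'a::real_inner \<Rightarrow> real"
  assumes d: "d \<noteq> 0"
  shows "W U (reflect_hyp d x) = U (reflect_hyp d (x /\<^sub>R norm x))"
  by (simp add: W_def rh_norm[OF d] rh_scale)

lemma G_nonneg:
  fixes U :: "'a::euclidean_space \<Rightarrow> real"
  assumes g: "good U d" and d: "d \<noteq> 0" and x: "x \<in> annulus"
  shows "0 \<le> (W U x - W U (reflect_hyp d x)) * (x \<bullet> d)"
proof -
  have x0: "x \<noteq> 0" using annulus_ne0[OF x] .
  define x' where "x' = x /\<^sub>R norm x"
  have x'S: "x' \<in> sphere 0 1" using x0 by (simp add: x'_def)
  have sgn: "d \<bullet> x' = (x \<bullet> d) / norm x" by (simp add: x'_def inner_commute divide_inverse mult.commute)
  have nx: "norm x > 0" using x0 by simp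
  have Wx: "W U x = U x'" by (simp add: W_def x'_def)
  have Wsx: "W U (reflect_hyp d x) = U (reflect_hyp d x')" by (simp add: W_refl[OF d] x'_def)
  consider "x \<bullet> d > 0" | "x \<bullet> d < 0" | "x \<bullet> d = 0" by linarith
  then show ?thesis
  proof cases
    case 1
    then have "d \<bullet> x' > 0" using sgn nx by simp
    then have "U (reflect_hyp d x') \<le> U x'" using g x'S unfolding good_def by blast
    then show ?thesis using 1 Wx Wsx by simp
  next
    case 2
    define y where "y = reflect_hyp d x'"
    have yS: "y \<in> sphere 0 1" using x'S d by (simp add: y_def rh_norm)
    have "d \<bullet> x' < 0" using sgn nx 2 by (simp add: divide_neg_pos)
    then have "d \<bullet> y > 0" using d by (simp add: y_def rh_inner_a)
    then have "U (reflect_hyp d y) \<le> U y" using g yS unfolding good_def by blast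
    then have "U x' \<le> U (reflect_hyp d x')" using d by (simp add: y_def rh_rh)
    then show ?thesis using 2 Wx Wsx by (simp add: mult_nonpos_nonpos)
  next
    case 3 then show ?thesis by simp
  qed
qed

lemma exists_c_wo:
  fixes U :: "real^'m::{finite,wellorder} \<Rightarrow> real"
  assumes cont: "continuous_on (sphere 0 1) U"
    and p: "p \<in> sphere 0 1" and q: "q \<in> sphere 0 1" and pq: "U q < U p"
    and sep: "separable_sphere U"
  shows "\<exists>c. c \<noteq> 0 \<and> (\<forall>d. d \<noteq> 0 \<and> good U d \<longrightarrow> 0 \<le> c \<bullet> d)"
proof -
  let ?A = "annulus :: (real^'m::{finite,wellorder}) set"
  have cA: "compact ?A" by (rule compact_annulus)
  have cW: "continuous_on ?A (W U)" by (rule W_cont[OF cont])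
  define c :: "real^'m::{finite,wellorder}" where "c = (\<chi> i. integral ?A (\<lambda>x. W U x * x $ i))"
  have ccomp: "continuous_on ?A (\<lambda>x::real^'m::{finite,wellorder}. x $ i)" for i by (intro continuous_intros)
  have cd: "c \<bullet> d = integral ?A (\<lambda>x. W U x * (x \<bullet> d))" for d
  proof -
    have "c \<bullet> d = (\<Sum>i\<in>UNIV. integral ?A (\<lambda>x. W U x * x $ i) * d $ i)"
      by (simp add: c_def inner_vec_def)
    also have "\<dots> = (\<Sum>i\<in>UNIV. integral ?A (\<lambda>x. W U x * x $ i * d $ i))"
      by simp
    also have "\<dots> = integral ?A (\<lambda>x. \<Sum>i\<in>UNIV. W U x * x $ i * d $ i)"
      by (rule integral_sum[symmetric]) (auto intro!: int_cont[OF cA] continuous_intros cW)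
    also have "\<dots> = integral ?A (\<lambda>x. W U x * (x \<bullet> d))"
      by (simp add: inner_vec_def sum_distrib_left mult.assoc)
    finally show ?thesis .
  qed
  have key: "integral ?A (\<lambda>x. (W U x - W U (reflect_hyp d x)) * (x \<bullet> d)) = 2 * (c \<bullet> d)"
    if d: "d \<noteq> 0" for d
  proof -
    have cWs: "continuous_on ?A (\<lambda>x. W U (reflect_hyp d x))"
      by (rule continuous_on_compose2[OF cW rh_cont]) (use rh_annulus[OF d] in auto)
    have i1: "(\<lambda>x. W U x * (x \<bullet> d)) integrable_on ?A"
      by (auto intro!: int_cont[OF cA] continuous_intros cW)
    have i2: "(\<lambda>x. W U (reflect_hyp d x) * (x \<bullet> d)) integrable_on ?A"
      by (auto intro!: int_cont[OF cA] continuous_intros cWs)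
    have h: "continuous_on ?A (\<lambda>x. W U x * (reflect_hyp d x \<bullet> d))"
      by (auto intro!: continuous_intros cW rh_cont)
    have "integral ?A (\<lambda>x. W U (reflect_hyp d x) * (x \<bullet> d))
        = integral ?A (\<lambda>x. (\<lambda>y. W U y * (reflect_hyp d y \<bullet> d)) (reflect_hyp d x))"
      using d by (simp add: rh_rh)
    also have "\<dots> = integral ?A (\<lambda>y. W U y * (reflect_hyp d y \<bullet> d))"
      by (rule inv_int[OF d h])
    also have "\<dots> = integral ?A (\<lambda>y. - (W U y * (y \<bullet> d)))"
      using d by (simp add: inner_commute[of _ d] rh_inner_a)
    also have "\<dots> = - (c \<bullet> d)" by (simp add: cd)
    finally have e2: "integral ?A (\<lambda>x. W U (reflect_hyp d x) * (x \<bullet> d)) = - (c \<bullet> d)" .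
    have "integral ?A (\<lambda>x. (W U x - W U (reflect_hyp d x)) * (x \<bullet> d))
        = integral ?A (\<lambda>x. W U x * (x \<bullet> d) - W U (reflect_hyp d x) * (x \<bullet> d))"
      by (simp add: left_diff_distrib)
    also have "\<dots> = integral ?A (\<lambda>x. W U x * (x \<bullet> d)) - integral ?A (\<lambda>x. W U (reflect_hyp d x) * (x \<bullet> d))"
      by (rule integral_diff[OF i1 i2])
    also have "\<dots> = 2 * (c \<bullet> d)" using e2 cd by simp
    finally show ?thesis .
  qed
  have good_nonneg: "0 \<le> c \<bullet> d" if d: "d \<noteq> 0" and g: "good U d" for d
  proof -
    have "0 \<le> integral ?A (\<lambda>x. (W U x - W U (reflect_hyp d x)) * (x \<bullet> d))"
    proof (rule integral_nonneg)
      have cWs: "continuous_on ?A (\<lambda>x. W U (reflect_hyp d x))"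
        by (rule continuous_on_compose2[OF cW rh_cont]) (use rh_annulus[OF d] in auto)
      show "(\<lambda>x. (W U x - W U (reflect_hyp d x)) * (x \<bullet> d)) integrable_on ?A"
        by (auto intro!: int_cont[OF cA] continuous_intros cW cWs)
    qed (rule G_nonneg[OF g d])
    then show ?thesis using key[OF d] by simp
  qed
  have pqne: "p \<noteq> q" using pq by auto
  define d0 where "d0 = p - q"
  have d0: "d0 \<noteq> 0" using pqne by (simp add: d0_def)
  have np: "norm p = 1" "norm q = 1" using p q by auto
  have gd0: "good U d0"
  proof -
    have "\<not> good U (- d0)"
    proof
      assume g: "good U (- d0)"
      have "- d0 = q - p" by (simp add: d0_def)
      moreover have "(q - p) \<bullet> q > 0" using rh_pos[of q p] np pqne by simp
      ultimately have "U (reflect_hyp (q - p) q) \<le> U q" using g q unfolding good_def by metis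
      then show False using rh_swap[of q p] np pqne pq by simp
    qed
    then show ?thesis using sep_cases[OF sep d0] by blast
  qed
  define x0 :: "real^'m::{finite,wellorder}" where "x0 = (3/4) *\<^sub>R p"
  have cWs: "continuous_on ?A (\<lambda>x. W U (reflect_hyp d0 x))"
    by (rule continuous_on_compose2[OF cW rh_cont]) (use rh_annulus[OF d0] in auto)
  have "0 < integral ?A (\<lambda>x. (W U x - W U (reflect_hyp d0 x)) * (x \<bullet> d0))"
  proof (rule pos_int[OF cA _ _ _ _])
    show "continuous_on ?A (\<lambda>x. (W U x - W U (reflect_hyp d0 x)) * (x \<bullet> d0))"
      by (auto intro!: continuous_intros cW cWs)
    show "0 \<le> (W U x - W U (reflect_hyp d0 x)) * (x \<bullet> d0)" if "x \<in> ?A" for x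
      by (rule G_nonneg[OF gd0 d0 that])
    show "(0::real) < 1/4" by simp
    show "ball x0 (1/4) \<subseteq> ?A"
    proof
      fix y assume "y \<in> ball x0 (1/4)"
      then have "norm (y - x0) < 1/4" by (simp add: dist_norm norm_minus_commute)
      moreover have "norm x0 = 3/4" using np by (simp add: x0_def)
      moreover have "norm x0 - norm (y - x0) \<le> norm y" "norm y \<le> norm x0 + norm (y - x0)"
        using norm_triangle_ineq[of x0 "y - x0"] norm_triangle_ineq2[of x0 "x0 - y"]
        by (auto simp: norm_minus_commute)
      ultimately show "y \<in> ?A" by (simp add: mem_annulus)
    qed
    have Wx0: "W U x0 = U p" using np by (simp add: W_def x0_def)
    have "reflect_hyp d0 x0 = (3/4) *\<^sub>R q"
      using rh_swap[of p q] np pqne by (simp add: x0_def d0_def rh_scale)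
    then have Wsx0: "W U (reflect_hyp d0 x0) = U q" using np by (simp add: W_def)
    have "x0 \<bullet> d0 = (3/4) * (d0 \<bullet> p)" by (simp add: x0_def inner_commute)
    moreover have "d0 \<bullet> p > 0" using rh_pos[of p q] np pqne by (simp add: d0_def)
    ultimately have "x0 \<bullet> d0 > 0" by simp
    then show "0 < (W U x0 - W U (reflect_hyp d0 x0)) * (x0 \<bullet> d0)"
      using Wx0 Wsx0 pq by simp
  qed
  then have "c \<bullet> d0 > 0" using key[OF d0] by simp
  then have "c \<noteq> 0" by auto
  then show ?thesis using good_nonneg by blast
qed



typedef ('a::"{finite,linorder}") wo = "UNIV :: 'a set" by auto

instantiation wo :: ("{finite,linorder}") linorder
begin
definition less_eq_wo :: "'a wo \<Rightarrow> 'a wo \<Rightarrow> bool" where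
  "less_eq_wo x y \<longleftrightarrow> Rep_wo x \<le> Rep_wo y"
definition less_wo :: "'a wo \<Rightarrow> 'a wo \<Rightarrow> bool" where
  "less_wo x y \<longleftrightarrow> Rep_wo x < Rep_wo y"
instance
  by standard (auto simp: less_eq_wo_def less_wo_def Rep_wo_inject[symmetric])
end

instance wo :: ("{finite,linorder}") finite
proof
  have "(UNIV :: 'a wo set) = Abs_wo ` UNIV"
    by (metis type_definition.Abs_image type_definition_wo)
  then show "finite (UNIV :: 'a wo set)" by (metis finite finite_imageI)
qed

instance wo :: ("{finite,linorder}") wellorder
proof
  fix P :: "'a wo \<Rightarrow> bool" and a :: "'a wo"
  assume step: "\<And>x. (\<And>y. y < x \<Longrightarrow> P y) \<Longrightarrow> P x"
  show "P a"
  proof (induction a rule: measure_induct_rule[where f = "\<lambda>x. card {y::'a wo. y < x}"])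
    case (less x)
    show ?case
    proof (rule step)
      fix y assume yx: "y < x"
      have "{z. z < y} \<subset> {z::'a wo. z < x}" using yx by auto
      then have "card {z. z < y} < card {z::'a wo. z < x}" by (rule psubset_card_mono[OF finite])
      then show "P y" using less by blast
    qed
  qed
qed

definition phi :: "real^('n::{finite,linorder} wo) \<Rightarrow> real^('n::{finite,linorder})" where
  "phi y = (\<chi> i. y $ Abs_wo i)"

definition psi :: "real^('n::{finite,linorder}) \<Rightarrow> real^('n::{finite,linorder} wo)" where
  "psi x = (\<chi> j. x $ Rep_wo j)"

lemma phi_psi: "phi (psi x) = x"
  by (simp add: phi_def psi_def vec_eq_iff Abs_wo_inverse)

lemma psi_phi: "psi (phi y) = y"
  by (simp add: phi_def psi_def vec_eq_iff Rep_wo_inverse)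

lemma phi_inner: "phi a \<bullet> phi b = a \<bullet> b"
proof -
  have "phi a \<bullet> phi b = (\<Sum>i\<in>UNIV. a $ Abs_wo i * b $ Abs_wo i)"
    by (simp add: phi_def inner_vec_def)
  also have "\<dots> = (\<Sum>j\<in>UNIV. a $ j * b $ j)"
    by (rule sum.reindex_bij_witness[of _ Rep_wo Abs_wo]) (auto simp: Rep_wo_inverse Abs_wo_inverse)
  also have "\<dots> = a \<bullet> b" by (simp add: inner_vec_def)
  finally show ?thesis .
qed

lemma phi_norm: "norm (phi a) = norm a"
  by (simp add: norm_eq_sqrt_inner phi_inner)

lemma phi_lin: "phi (x - r *\<^sub>R y) = phi x - r *\<^sub>R phi y"
  by (simp add: phi_def vec_eq_iff)

lemma phi_linear: "linear phi"
  by (intro linearI) (simp_all add: phi_def vec_eq_iff)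

lemma phi_refl: "phi (reflect_hyp a x) = reflect_hyp (phi a) (phi x)"
  by (simp add: reflect_hyp_def phi_lin phi_inner)

lemma phi_eq0: "phi a = 0 \<longleftrightarrow> a = 0"
  by (metis phi_norm norm_eq_zero)

lemma exists_c:
  fixes u :: "real^'n::{finite,linorder} \<Rightarrow> real"
  assumes cont: "continuous_on (sphere 0 1) u"
    and nc: "\<exists>x\<in>sphere 0 1. \<exists>y\<in>sphere 0 1. u x \<noteq> u y"
    and sep: "separable_sphere u"
  shows "\<exists>c. c \<noteq> 0 \<and> (\<forall>d. d \<noteq> 0 \<and> good u d \<longrightarrow> 0 \<le> c \<bullet> d)"
proof -
  obtain p q where p: "p \<in> sphere 0 1" and q: "q \<in> sphere 0 1" and pq: "u q < u p"
    using nc by (metis linorder_neqE_linordered_idom)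
  define U where "U = (\<lambda>y. u (phi y))"
  have bl: "bounded_linear phi" using phi_linear by (simp add: linear_conv_bounded_linear)
  have contU: "continuous_on (sphere 0 1) U"
    unfolding U_def by (rule continuous_on_compose2[OF cont linear_continuous_on[OF bl]]) (auto simp: phi_norm)
  have pS: "psi p \<in> sphere 0 1" "psi q \<in> sphere 0 1"
    using p q by (metis mem_sphere_0 phi_norm phi_psi)+
  have pqU: "U (psi q) < U (psi p)" using pq by (simp add: U_def phi_psi)
  have sepU: "separable_sphere U"
    unfolding separable_sphere_def
  proof (intro allI impI)
    fix a :: "real^('n::{finite,linorder} wo)" assume a: "a \<noteq> 0"
    then have "phi a \<noteq> 0" by (simp add: phi_eq0)
    then have "(\<forall>x\<in>sphere 0 1. phi a \<bullet> x > 0 \<longrightarrow> u x \<ge> u (reflect_hyp (phi a) x)) \<or>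
        (\<forall>x\<in>sphere 0 1. phi a \<bullet> x > 0 \<longrightarrow> u x \<le> u (reflect_hyp (phi a) x))"
      using sep unfolding separable_sphere_def by blast
    moreover have "phi x \<in> sphere 0 1" if "x \<in> sphere 0 1" for x using that by (simp add: phi_norm)
    ultimately show "(\<forall>x\<in>sphere 0 1. a \<bullet> x > 0 \<longrightarrow> U x \<ge> U (reflect_hyp a x)) \<or>
        (\<forall>x\<in>sphere 0 1. a \<bullet> x > 0 \<longrightarrow> U x \<le> U (reflect_hyp a x))"
      unfolding U_def phi_refl by (metis phi_inner)
  qed
  obtain c' where c'0: "c' \<noteq> 0" and hc': "\<forall>d. d \<noteq> 0 \<and> good U d \<longrightarrow> 0 \<le> c' \<bullet> d"
    using exists_c_wo[OF contU pS(1) pS(2) pqU sepU] by blast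
  show ?thesis
  proof (intro exI[of _ "phi c'"] conjI allI impI)
    show "phi c' \<noteq> 0" using c'0 by (simp add: phi_eq0)
  next
    fix d :: "real^'n::{finite,linorder}" assume h: "d \<noteq> 0 \<and> good u d"
    have d0: "psi d \<noteq> 0" using h by (metis phi_eq0 phi_psi)
    have "good U (psi d)" unfolding good_def
    proof (intro ballI impI)
      fix x :: "real^('n::{finite,linorder} wo)" assume x: "x \<in> sphere 0 1" and pos: "psi d \<bullet> x > 0"
      have "phi x \<in> sphere 0 1" using x by (simp add: phi_norm)
      moreover have "d \<bullet> phi x > 0" using pos by (metis phi_inner phi_psi)
      ultimately have "u (reflect_hyp d (phi x)) \<le> u (phi x)" using h unfolding good_def by blast
      then show "U (reflect_hyp (psi d) x) \<le> U x" by (simp add: U_def phi_refl phi_psi)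
    qed
    then have "0 \<le> c' \<bullet> psi d" using hc' d0 by blast
    then show "0 \<le> phi c' \<bullet> d" by (metis phi_inner phi_psi)
  qed
qed


theorem lemma2p4:
  fixes u :: "real^'n::{finite,linorder} \<Rightarrow> real"
  assumes "CARD('n::{finite,linorder}) \<ge> 2"
    and "continuous_on (sphere 0 1) u"
    and "\<forall>x\<in>sphere 0 1. u x > 0"
    and "\<exists>x\<in>sphere 0 1. \<exists>y\<in>sphere 0 1. u x \<noteq> u y"
    and "separable_sphere u"
  shows "\<exists>M::real^'n::{finite,linorder}^'n::{finite,linorder}. \<exists>h1 h2::real.
     orthogonal_matrix M \<and> h1 \<in> {-1..1} \<and> h2 \<in> {-1..1} \<and>
     h1 > h2 \<and>
     {x\<in>sphere 0 1. rot_fun u M x = (SUP y\<in>sphere 0 1. rot_fun u M y)}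
        = {x\<in>sphere 0 1. x $ last_ix \<ge> h1} \<and>
     {x\<in>sphere 0 1. rot_fun u M x = (INF y\<in>sphere 0 1. rot_fun u M y)}
        = {x\<in>sphere 0 1. x $ last_ix \<le> h2} \<and>
     (\<forall>h\<in>{-1..1}. \<forall>x\<in>sphere 0 1. \<forall>y\<in>sphere 0 1.
        x $ last_ix = h \<and> y $ last_ix = h \<longrightarrow> rot_fun u M x = rot_fun u M y) \<and>
     (\<forall>\<alpha> \<beta>. pi/2 \<le> \<alpha> \<and> \<alpha> \<le> \<beta> \<and> \<beta> \<le> 3*pi/2 \<longrightarrow>
        rot_fun u M (\<chi> i. if i = last_ix then sin \<beta> else if i = penult_ix then cos \<beta> else 0)
        \<le> rot_fun u M (\<chi> i. if i = last_ix then sin \<alpha> else if i = penult_ix then cos \<alpha> else 0))"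
proof -
  note card = assms(1) and cont = assms(2) and nc = assms(4) and sep = assms(5)
  obtain c where c0: "c \<noteq> 0" and hc: "\<forall>d. d \<noteq> 0 \<and> good u d \<longrightarrow> 0 \<le> c \<bullet> d"
    using exists_c[OF cont nc sep] by blast
  have mono: "\<And>x y. x \<in> sphere 0 1 \<Longrightarrow> y \<in> sphere 0 1 \<Longrightarrow> y \<bullet> c \<le> x \<bullet> c \<Longrightarrow> u y \<le> u x"
    using mono_le[OF cont sep hc c0] by blast
  define e where "e = c /\<^sub>R norm c"
  have ne: "norm e = 1" using c0 by (simp add: e_def)
  obtain f where f: "orthogonal_transformation f" and fe: "f e = axis (last_ix::'n::{finite,linorder}) (1::real)"
    using orthogonal_transformation_exists_1[OF ne, of "axis (last_ix::'n::{finite,linorder}) (1::real)"] by auto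
  define M where "M = matrix f"
  have lf: "linear f" using f by (simp add: orthogonal_transformation_def)
  have oM: "orthogonal_matrix M" using f by (simp add: M_def orthogonal_transformation_matrix)
  have Mv: "M *v x = f x" for x using lf by (simp add: M_def matrix_works)
  have inv: "M ** matrix_inv M = mat 1 \<and> matrix_inv M ** M = mat 1"
    unfolding matrix_inv_def
    by (rule someI[of _ "transpose M"]) (use oM in \<open>simp add: orthogonal_matrix_def\<close>)
  define g where "g x = matrix_inv M *v x" for x
  have fg: "f (g x) = x" for x
    by (metis Mv g_def inv matrix_vector_mul_assoc matrix_vector_mul_lid)
  have gf: "g (f x) = x" for x
    by (metis Mv g_def inv matrix_vector_mul_assoc matrix_vector_mul_lid)
  have rf: "rot_fun u M x = u (g x)" for x by (simp add: rot_fun_def g_def)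
  have ng: "norm (g x) = norm x" for x
    by (metis fg orthogonal_transformation_norm[OF f])
  have gS: "x \<in> sphere 0 1 \<Longrightarrow> g x \<in> sphere 0 1" for x by (simp add: ng)
  have gc: "g x \<bullet> c = norm c * x $ last_ix" for x
  proof -
    have "g x \<bullet> c = norm c * (g x \<bullet> e)" using c0 by (simp add: e_def)
    also have "g x \<bullet> e = f (g x) \<bullet> f e" using f by (simp add: orthogonal_transformation_def)
    also have "\<dots> = x $ last_ix" by (simp add: fg fe inner_axis)
    finally show ?thesis .
  qed
  define F where "F = rot_fun u M"
  have contg: "continuous_on A g" for A
    unfolding g_def by (intro continuous_intros)
  have contF: "continuous_on (sphere 0 1) F"
    unfolding F_def rf[abs_def]
    by (rule continuous_on_compose2[OF cont contg]) (auto simp: ng)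
  have ncF: "\<exists>x\<in>sphere 0 1. \<exists>y\<in>sphere 0 1. F x \<noteq> F y"
  proof -
    obtain a b where ab: "a \<in> sphere 0 1" "b \<in> sphere 0 1" "u a \<noteq> u b" using nc by blast
    have "f a \<in> sphere 0 1" "f b \<in> sphere 0 1" using ab orthogonal_transformation_norm[OF f] by auto
    moreover have "F (f a) \<noteq> F (f b)" using ab by (simp add: F_def rf gf)
    ultimately show ?thesis by blast
  qed
  have PF: "\<And>x y. x \<in> sphere 0 1 \<Longrightarrow> y \<in> sphere 0 1 \<Longrightarrow> y $ last_ix \<le> x $ last_ix \<Longrightarrow> F y \<le> F x"
  proof -
    fix x y :: "real^'n::{finite,linorder}" assume x: "x \<in> sphere 0 1" and y: "y \<in> sphere 0 1" and le: "y $ last_ix \<le> x $ last_ix"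
    have "g y \<bullet> c \<le> g x \<bullet> c" using le c0 by (simp add: gc)
    then show "F y \<le> F x" using mono[OF gS[OF x] gS[OF y]] by (simp add: F_def rf)
  qed
  from final_props[OF card contF ncF PF] oM show ?thesis unfolding F_def by blast
qed


end
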